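(* Let $1\leq d<2$. Then for all $u\in H^1(\mathbb{R}_+,(1+t)^{d-1})$ \[ \sup_{t\geq0}|u(t)|^2\leq K\left(\int_0^\infty|u'|^2(1+t)^{d-1}dt\right)^{d/2}\left(\int_0^\infty|u|^2(1+t)^{d-1}dt\right)^{1-d/2} \] with $K=(2d)^d(2(d-1))^{-2(d-1)}(2-d)^{-1}$, using the convention $0^0=1$.
   Context: $H^1(\mathbb{R}_+,(1+t)^{d-1})$ is the space of $u\in H^1_{\mathrm{loc}}(\mathbb{R}_+)$ with $\int_0^\infty(|u'|^2+|u|^2)(1+t)^{d-1}dt<\infty$. *)

theory Defs
  imports "HOL-Analysis.Analysis"
begin

definition wt :: "real \<Rightarrow> real \<Rightarrow> real" where
  "wt d t = (1 + t) powr (d - 1)"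

text \<open>An element of H^1_loc([0,oo)) is identified with its locally absolutely
  continuous representative: u is the integral of its weak derivative u',
  u' is locally integrable, and both weighted L^2 integrals are finite.\<close>
definition H1w :: "real \<Rightarrow> (real \<Rightarrow> complex) \<Rightarrow> (real \<Rightarrow> complex) \<Rightarrow> bool" where
  "H1w d u u' \<longleftrightarrow>
     u \<in> borel_measurable lborel \<and> u' \<in> borel_measurable lborel \<and>
     (\<forall>t\<ge>0. set_integrable lborel {0..t} u') \<and>
     (\<forall>t\<ge>0. u t = u 0 + (LBINT s=0..t. u' s)) \<and>
     set_integrable lborel {0..} (\<lambda>t. (cmod (u' t))\<^sup>2 * wt d t) \<and>
     set_integrable lborel {0..} (\<lambda>t. (cmod (u t))\<^sup>2 * wt d t)"

text \<open>The constant K, with the convention 0^0 = 1 (relevant at d = 1).\<close>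
definition Kconst :: "real \<Rightarrow> real" where
  "Kconst d = (2 * d) powr d
      * (if d = 1 then 1 else (2 * (d - 1)) powr (- 2 * (d - 1))) / (2 - d)"

end

theory Submission
  imports Defs
begin


lemma gamma_shift:
  fixes c x t :: real assumes c: "c>0" and x: "x>0"
  shows "(\<integral>\<^sup>+s. ennreal (indicator {t<..} s * (s-t) powr (x-1) * exp (-(c*(s-t)))) \<partial>lborel)
        = ennreal (Gamma x / c powr x)"
proof -
  let ?f = "\<lambda>s. ennreal (indicator {t<..} s * (s-t) powr (x-1) * exp (-(c*(s-t))))"
  have "(\<integral>\<^sup>+s. ?f s \<partial>lborel) = \<bar>1/c\<bar> * (\<integral>\<^sup>+y. ?f (t + 1/c * y) \<partial>lborel)"
    by (rule nn_integral_real_affine) (use c in auto)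
  also have "(\<integral>\<^sup>+y. ?f (t + 1/c * y) \<partial>lborel) =
      (\<integral>\<^sup>+y. ennreal (c powr (1-x)) * ennreal (indicator {0..} y * y powr (x - 1) / exp y) \<partial>lborel)"
  proof (rule nn_integral_cong)
    fix y :: real
    show "?f (t + 1/c * y) = ennreal (c powr (1-x)) * ennreal (indicator {0..} y * y powr (x - 1) / exp y)"
    proof (cases "y > 0")
      case True
      have e1: "c powr (1-x) = inverse (c powr (x-1))"
        using powr_minus[of c "x-1"] by simp
      have "(y/c) powr (x-1) = y powr (x-1) / c powr (x-1)"
        using True c by (simp add: powr_divide)
      then have "(y/c) powr (x-1) = y powr (x-1) * c powr (1-x)"
        by (simp add: e1 divide_inverse)
      then show ?thesis using True c
        by (simp add: ennreal_mult'[symmetric] indicator_def exp_minus field_simps)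
    next
      case False
      then show ?thesis using c by (auto simp: indicator_def divide_pos_pos zero_less_divide_iff)
    qed
  qed
  also have "\<dots> = ennreal (c powr (1-x)) * (\<integral>\<^sup>+y. ennreal (indicator {0..} y * y powr (x - 1) / exp y) \<partial>lborel)"
    by (rule nn_integral_cmult) auto
  also have "\<dots> = ennreal (c powr (1-x)) * ennreal (Gamma x)"
    using Gamma_conv_nn_integral_real[OF x] by simp
  finally show ?thesis using c x
    by (simp add: ennreal_mult'[symmetric] powr_diff powr_minus divide_simps)
qed



lemma set_nn_eq:
  fixes f :: "real \<Rightarrow> real"
  assumes "set_integrable lborel A f" "\<And>x. 0 \<le> f x"
  shows "(\<integral>\<^sup>+x. ennreal (indicator A x * f x) \<partial>lborel) = ennreal (LINT x:A|lborel. f x)"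
proof -
  have "integrable lborel (\<lambda>x. indicator A x * f x)"
    using assms(1) by (simp add: set_integrable_def)
  then show ?thesis
    unfolding set_lebesgue_integral_def
    by (subst nn_integral_eq_integral) (auto simp: assms(2) indicator_def)
qed

lemma step1:
  assumes H: "H1w d u u'" and t: "0 \<le> t" and ts: "t \<le> s"
  shows "ennreal (cmod (u t)) \<le> ennreal (cmod (u s)) +
     (\<integral>\<^sup>+\<sigma>. ennreal (indicator {t<..s} \<sigma> * cmod (u' \<sigma>)) \<partial>lborel)"
proof -
  have is0: "set_integrable lborel {0..s} u'" using H t ts unfolding H1w_def by auto
  have ist: "set_integrable lborel {0..t} u'" using H t unfolding H1w_def by auto
  have ists: "set_integrable lborel {t<..s} u'"
    by (rule set_integrable_subset[OF is0]) (use t in auto)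
  have rep: "\<forall>t\<ge>0. u t = u 0 + (LBINT s=0..t. u' s)" using H unfolding H1w_def by blast
  have us: "u s = u 0 + (LINT x:{0..s}|lborel. u' x)"
    using rep[rule_format, of s] t ts by (simp only: interval_integral_Icc[of 0 s] zero_ereal_def)
  have ut: "u t = u 0 + (LINT x:{0..t}|lborel. u' x)"
    using rep[rule_format, of t] t ts by (simp only: interval_integral_Icc[of 0 t] zero_ereal_def)
  have "{0..s} = {0..t} \<union> {t<..s}" using t ts by auto
  then have "(LINT x:{0..s}|lborel. u' x) = (LINT x:{0..t}|lborel. u' x) + (LINT x:{t<..s}|lborel. u' x)"
    using set_integral_Un[OF _ ist ists] by (metis (no_types, lifting) Int_emptyI greaterThanAtMost_iff atLeastAtMost_iff not_le)
  then have diff: "u s - u t = (LINT x:{t<..s}|lborel. u' x)" using us ut by simp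
  have "cmod (u t) \<le> cmod (u s) + cmod (u s - u t)"
    using norm_triangle_ineq[of "u s" "u t - u s"] by (simp add: norm_minus_commute)
  also have "cmod (u s - u t) \<le> (LINT x:{t<..s}|lborel. cmod (u' x))"
    unfolding diff by (rule set_integral_norm_bound[OF ists])
  finally have "cmod (u t) \<le> cmod (u s) + (LINT x:{t<..s}|lborel. cmod (u' x))" by simp
  then have "ennreal (cmod (u t)) \<le> ennreal (cmod (u s) + (LINT x:{t<..s}|lborel. cmod (u' x)))"
    by (rule ennreal_leI)
  also have "\<dots> = ennreal (cmod (u s)) + ennreal (LINT x:{t<..s}|lborel. cmod (u' x))"
    by (rule ennreal_plus) (auto simp: set_lebesgue_integral_def indicator_def intro!: Bochner_Integration.integral_nonneg)
  also have "ennreal (LINT x:{t<..s}|lborel. cmod (u' x)) =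
      (\<integral>\<^sup>+\<sigma>. ennreal (indicator {t<..s} \<sigma> * cmod (u' \<sigma>)) \<partial>lborel)"
    by (rule set_nn_eq[symmetric]) (auto intro: set_integrable_norm[OF ists])
  finally show ?thesis .
qed



lemma exp_total:
  fixes c t :: real assumes c: "c > 0"
  shows "(\<integral>\<^sup>+s. ennreal (c * indicator {t<..} s * exp (-(c*(s-t)))) \<partial>lborel) = 1"
proof -
  have "(\<integral>\<^sup>+s. ennreal (c * indicator {t<..} s * exp (-(c*(s-t)))) \<partial>lborel)
      = (\<integral>\<^sup>+s. ennreal c * ennreal (indicator {t<..} s * (s-t) powr (1-1) * exp (-(c*(s-t)))) \<partial>lborel)"
    by (rule nn_integral_cong) (use c in \<open>auto simp: indicator_def ennreal_mult'[symmetric]\<close>)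
  also have "\<dots> = ennreal c * (\<integral>\<^sup>+s. ennreal (indicator {t<..} s * (s-t) powr (1-1) * exp (-(c*(s-t)))) \<partial>lborel)"
    by (rule nn_integral_cmult) auto
  also have "\<dots> = ennreal c * ennreal (Gamma 1 / c powr 1)"
    using gamma_shift[OF c, of 1 t] by simp
  also have "\<dots> = 1" using c by (simp add: ennreal_mult'[symmetric])
  finally show ?thesis .
qed

lemma exp_tail:
  fixes c t \<sigma> :: real assumes c: "c > 0" and st: "t < \<sigma>"
  shows "(\<integral>\<^sup>+s. ennreal (c * indicator {t<..} s * exp (-(c*(s-t)))) * indicator {\<sigma>..} s \<partial>lborel)
         = ennreal (exp (-(c*(\<sigma>-t))))"
proof -
  have "(\<integral>\<^sup>+s. ennreal (c * indicator {t<..} s * exp (-(c*(s-t)))) * indicator {\<sigma>..} s \<partial>lborel)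
      = (\<integral>\<^sup>+s. ennreal (exp (-(c*(\<sigma>-t)))) * ennreal (c * indicator {\<sigma><..} s * exp (-(c*(s-\<sigma>)))) \<partial>lborel)"
  proof (rule nn_integral_cong_AE)
    show "AE s in lborel. ennreal (c * indicator {t<..} s * exp (-(c*(s-t)))) * indicator {\<sigma>..} s
        = ennreal (exp (-(c*(\<sigma>-t)))) * ennreal (c * indicator {\<sigma><..} s * exp (-(c*(s-\<sigma>))))"
    proof (rule eventually_mono[OF AE_lborel_singleton[of \<sigma>]])
      fix s :: real assume "s \<noteq> \<sigma>"
      moreover have "exp (-(c*(s-t))) = exp (-(c*(\<sigma>-t))) * exp (-(c*(s-\<sigma>)))"
        by (simp add: exp_add[symmetric] algebra_simps)
      ultimately show "ennreal (c * indicator {t<..} s * exp (-(c*(s-t)))) * indicator {\<sigma>..} s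
        = ennreal (exp (-(c*(\<sigma>-t)))) * ennreal (c * indicator {\<sigma><..} s * exp (-(c*(s-\<sigma>))))"
        using st c by (auto simp: indicator_def ennreal_mult'[symmetric] mult_ac)
    qed
  qed
  also have "\<dots> = ennreal (exp (-(c*(\<sigma>-t)))) * (\<integral>\<^sup>+s. ennreal (c * indicator {\<sigma><..} s * exp (-(c*(s-\<sigma>)))) \<partial>lborel)"
    by (rule nn_integral_cmult) auto
  also have "\<dots> = ennreal (exp (-(c*(\<sigma>-t))))" using exp_total[OF c, of \<sigma>] by simp
  finally show ?thesis .
qed



lemma avg:
  assumes H: "H1w d u u'" and t: "0 \<le> t" and c: "c > 0"
  shows "ennreal (cmod (u t)) \<le>
     (\<integral>\<^sup>+s. ennreal (c * indicator {t<..} s * exp (-(c*(s-t))) * cmod (u s)) \<partial>lborel)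
   + (\<integral>\<^sup>+\<sigma>. ennreal (indicator {t<..} \<sigma> * cmod (u' \<sigma>) * exp (-(c*(\<sigma>-t)))) \<partial>lborel)"
proof -
  have [measurable]: "u \<in> borel_measurable borel" "u' \<in> borel_measurable borel"
    using H unfolding H1w_def by auto
  define g where "g s = ennreal (c * indicator {t<..} s * exp (-(c*(s-t))))" for s
  define h where "h s \<sigma> = ennreal ((if t < \<sigma> \<and> \<sigma> \<le> s then 1 else 0) * cmod (u' \<sigma>))" for s \<sigma>
  have gm[measurable]: "g \<in> borel_measurable borel" unfolding g_def by measurable
  have hm[measurable]: "case_prod h \<in> borel_measurable (lborel \<Otimes>\<^sub>M lborel)"
    unfolding h_def by measurable
  have hm1: "h s \<in> borel_measurable lborel" for s unfolding h_def by measurable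
  have "ennreal (cmod (u t)) = (\<integral>\<^sup>+s. g s \<partial>lborel) * ennreal (cmod (u t))"
    using exp_total[OF c, of t] by (simp add: g_def)
  also have "\<dots> = (\<integral>\<^sup>+s. g s * ennreal (cmod (u t)) \<partial>lborel)"
    by (rule nn_integral_multc[symmetric]) simp
  also have "\<dots> \<le> (\<integral>\<^sup>+s. g s * ennreal (cmod (u s)) + g s * (\<integral>\<^sup>+\<sigma>. h s \<sigma> \<partial>lborel) \<partial>lborel)"
  proof (rule nn_integral_mono)
    fix s :: real
    show "g s * ennreal (cmod (u t)) \<le> g s * ennreal (cmod (u s)) + g s * (\<integral>\<^sup>+\<sigma>. h s \<sigma> \<partial>lborel)"
    proof (cases "t < s")
      case True
      have "(\<integral>\<^sup>+\<sigma>. ennreal (indicator {t<..s} \<sigma> * cmod (u' \<sigma>)) \<partial>lborel) = (\<integral>\<^sup>+\<sigma>. h s \<sigma> \<partial>lborel)"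
        by (rule nn_integral_cong) (auto simp: h_def indicator_def)
      then have "ennreal (cmod (u t)) \<le> ennreal (cmod (u s)) + (\<integral>\<^sup>+\<sigma>. h s \<sigma> \<partial>lborel)"
        using step1[OF H t, of s] True by simp
      then have "g s * ennreal (cmod (u t)) \<le> g s * (ennreal (cmod (u s)) + (\<integral>\<^sup>+\<sigma>. h s \<sigma> \<partial>lborel))"
        by (rule mult_left_mono) simp
      then show ?thesis by (simp add: distrib_left)
    next
      case False
      then show ?thesis by (simp add: g_def)
    qed
  qed
  also have "\<dots> = (\<integral>\<^sup>+s. g s * ennreal (cmod (u s)) \<partial>lborel) + (\<integral>\<^sup>+s. g s * (\<integral>\<^sup>+\<sigma>. h s \<sigma> \<partial>lborel) \<partial>lborel)"
    by (rule nn_integral_add) measurable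
  also have "(\<integral>\<^sup>+s. g s * (\<integral>\<^sup>+\<sigma>. h s \<sigma> \<partial>lborel) \<partial>lborel) = (\<integral>\<^sup>+s. (\<integral>\<^sup>+\<sigma>. g s * h s \<sigma> \<partial>lborel) \<partial>lborel)"
    by (rule nn_integral_cong) (rule nn_integral_cmult[symmetric, OF hm1])
  also have "\<dots> = (\<integral>\<^sup>+\<sigma>. (\<integral>\<^sup>+s. g s * h s \<sigma> \<partial>lborel) \<partial>lborel)"
    by (rule lborel_pair.Fubini'[symmetric]) measurable
  also have "\<dots> = (\<integral>\<^sup>+\<sigma>. ennreal (indicator {t<..} \<sigma> * cmod (u' \<sigma>) * exp (-(c*(\<sigma>-t)))) \<partial>lborel)"
  proof (rule nn_integral_cong)
    fix \<sigma> :: real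
    show "(\<integral>\<^sup>+s. g s * h s \<sigma> \<partial>lborel) = ennreal (indicator {t<..} \<sigma> * cmod (u' \<sigma>) * exp (-(c*(\<sigma>-t))))"
    proof (cases "t < \<sigma>")
      case True
      have "(\<integral>\<^sup>+s. g s * h s \<sigma> \<partial>lborel) = (\<integral>\<^sup>+s. ennreal (cmod (u' \<sigma>)) * (g s * indicator {\<sigma>..} s) \<partial>lborel)"
        by (rule nn_integral_cong) (use True in \<open>auto simp: h_def indicator_def mult.commute\<close>)
      also have "\<dots> = ennreal (cmod (u' \<sigma>)) * (\<integral>\<^sup>+s. g s * indicator {\<sigma>..} s \<partial>lborel)"
        by (rule nn_integral_cmult) measurable
      also have "(\<integral>\<^sup>+s. g s * indicator {\<sigma>..} s \<partial>lborel) = ennreal (exp (-(c*(\<sigma>-t))))"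
        unfolding g_def by (rule exp_tail[OF c True])
      finally show ?thesis using True by (simp add: ennreal_mult'[symmetric] indicator_def)
    next
      case False
      then show ?thesis by (simp add: h_def)
    qed
  qed
  finally show ?thesis by (simp add: g_def ennreal_mult'[symmetric] mult_ac)
qed



lemma pointwise_young:
  fixes d k F c t s \<mu> :: real
  assumes d: "1 \<le> d" and t: "0 \<le> t" and ts: "t < s" and mu: "\<mu> > 0" and F: "F \<ge> 0" and k: "k \<ge> 0"
  shows "k * F * exp (-(c*(s-t))) \<le> \<mu>/2 * (F\<^sup>2 * wt d s)
          + k\<^sup>2/(2*\<mu>) * ((s-t) powr ((2-d)-1) * exp (-((2*c)*(s-t))))"
proof -
  define w where "w = wt d s"
  define y where "y = k * exp (-(c*(s-t)))"
  have wpos: "w > 0" using ts t by (simp add: w_def wt_def)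
  have "(s-t) powr (d-1) \<le> (1+s) powr (d-1)"
    by (rule powr_mono2) (use d t ts in auto)
  then have le1: "(s-t) powr (d-1) \<le> w" by (simp add: w_def wt_def)
  have sp: "(s-t) powr (d-1) > 0" using ts by simp
  have inv: "(s-t) powr ((2-d)-1) = 1 / (s-t) powr (d-1)"
    using powr_minus[of "s-t" "d-1"] by (simp add: divide_inverse)
  have "1 / w \<le> (s-t) powr ((2-d)-1)" unfolding inv
    by (rule divide_left_mono) (use le1 sp wpos in auto)
  then have "y\<^sup>2 / \<mu> * (1 / w) \<le> y\<^sup>2 / \<mu> * (s-t) powr ((2-d)-1)"
    by (rule mult_left_mono) (use mu in simp)
  then have A: "y\<^sup>2 / (\<mu> * w) \<le> y\<^sup>2 / \<mu> * (s-t) powr ((2-d)-1)" by simp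
  moreover have B: "F * y \<le> (\<mu> * w * F\<^sup>2 + y\<^sup>2 / (\<mu> * w)) / 2"
  proof -
    have "0 \<le> (\<mu> * w * F - y)\<^sup>2 / (\<mu> * w)" using mu wpos by simp
    also have "(\<mu> * w * F - y)\<^sup>2 / (\<mu> * w) = \<mu> * w * F\<^sup>2 + y\<^sup>2 / (\<mu> * w) - 2 * F * y"
      using mu wpos by (simp add: field_simps power2_eq_square)
    finally show ?thesis by simp
  qed
  moreover have C: "y\<^sup>2 = k\<^sup>2 * exp (-((2*c)*(s-t)))"
    by (simp add: y_def power_mult_distrib power2_eq_square exp_add[symmetric])
  ultimately have "F * y \<le> (\<mu> * w * F\<^sup>2 + y\<^sup>2 / \<mu> * (s-t) powr ((2-d)-1)) / 2"
    using order_trans[OF B, of "(\<mu> * w * F\<^sup>2 + y\<^sup>2 / \<mu> * (s-t) powr ((2-d)-1)) / 2"] A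
    by (simp add: divide_right_mono)
  also have "\<dots> = \<mu>/2 * (F\<^sup>2 * wt d s)
          + k\<^sup>2/(2*\<mu>) * ((s-t) powr ((2-d)-1) * exp (-((2*c)*(s-t))))"
    unfolding C w_def by (simp add: field_simps)
  also have "F * y = k * F * exp (-(c*(s-t)))" by (simp add: y_def)
  finally show ?thesis .
qed



lemma ennreal_comb:
  fixes x y z w :: real assumes "x \<ge> 0" "y \<ge> 0" "z \<ge> 0" "w \<ge> 0"
  shows "ennreal x * ennreal y + ennreal z * ennreal w = ennreal (x*y + z*w)"
  using assms by (simp add: ennreal_mult[symmetric] ennreal_plus)

lemma part:
  fixes F :: "real \<Rightarrow> real"
  assumes d: "1 \<le> d" "d < 2" and t: "0 \<le> t" and c: "c > 0" and mu: "\<mu> > 0" and k: "k \<ge> 0"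
   and Fm[measurable]: "F \<in> borel_measurable borel" and Fnn: "\<And>s. F s \<ge> 0"
   and Fi: "set_integrable lborel {0..} (\<lambda>s. (F s)\<^sup>2 * wt d s)"
  shows "(\<integral>\<^sup>+s. ennreal (indicator {t<..} s * k * F s * exp (-(c*(s-t)))) \<partial>lborel)
     \<le> ennreal (\<mu>/2 * (LINT s:{0..}|lborel. (F s)\<^sup>2 * wt d s) + k\<^sup>2/(2*\<mu>) * (Gamma (2-d) / (2*c) powr (2-d)))"
proof -
  define a where "a s = indicator {0..} s * ((F s)\<^sup>2 * wt d s)" for s
  define b where "b s = indicator {t<..} s * (s-t) powr ((2-d)-1) * exp (-((2*c)*(s-t)))" for s
  have am[measurable]: "a \<in> borel_measurable borel" unfolding a_def wt_def by measurable
  have bm[measurable]: "b \<in> borel_measurable borel" unfolding b_def by measurable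
  have wnn: "wt d s \<ge> 0" for s by (simp add: wt_def)
  have ann: "a s \<ge> 0" for s using wnn by (simp add: a_def indicator_def)
  have bnn: "b s \<ge> 0" for s by (simp add: b_def indicator_def)
  have "(\<integral>\<^sup>+s. ennreal (indicator {t<..} s * k * F s * exp (-(c*(s-t)))) \<partial>lborel)
     \<le> (\<integral>\<^sup>+s. ennreal (\<mu>/2) * ennreal (a s) + ennreal (k\<^sup>2/(2*\<mu>)) * ennreal (b s) \<partial>lborel)"
  proof (rule nn_integral_mono)
    fix s :: real
    show "ennreal (indicator {t<..} s * k * F s * exp (-(c*(s-t))))
       \<le> ennreal (\<mu>/2) * ennreal (a s) + ennreal (k\<^sup>2/(2*\<mu>)) * ennreal (b s)"
    proof (cases "t < s")
      case True
      have "indicator {t<..} s * k * F s * exp (-(c*(s-t))) = k * F s * exp (-(c*(s-t)))"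
        using True by simp
      also have "\<dots> \<le> \<mu>/2 * a s + k\<^sup>2/(2*\<mu>) * b s"
        using pointwise_young[OF d(1) t True mu Fnn[of s] k, of c] True t
        by (simp add: a_def b_def)
      finally have "ennreal (indicator {t<..} s * k * F s * exp (-(c*(s-t)))) \<le> ennreal (\<mu>/2 * a s + k\<^sup>2/(2*\<mu>) * b s)"
        by (rule ennreal_leI)
      also have "\<dots> = ennreal (\<mu>/2) * ennreal (a s) + ennreal (k\<^sup>2/(2*\<mu>)) * ennreal (b s)"
        using mu ann[of s] bnn[of s] by (intro ennreal_comb[symmetric]) auto
      finally show ?thesis .
    next
      case False
      then show ?thesis by simp
    qed
  qed
  also have "\<dots> = ennreal (\<mu>/2) * (\<integral>\<^sup>+s. ennreal (a s) \<partial>lborel) + ennreal (k\<^sup>2/(2*\<mu>)) * (\<integral>\<^sup>+s. ennreal (b s) \<partial>lborel)"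
    by (simp add: nn_integral_add nn_integral_cmult)
  also have "(\<integral>\<^sup>+s. ennreal (a s) \<partial>lborel) = ennreal (LINT s:{0..}|lborel. (F s)\<^sup>2 * wt d s)"
    unfolding a_def by (rule set_nn_eq[OF Fi]) (simp add: wnn)
  also have "(\<integral>\<^sup>+s. ennreal (b s) \<partial>lborel) = ennreal (Gamma (2-d) / (2*c) powr (2-d))"
    unfolding b_def by (rule gamma_shift) (use c d in auto)
  also have "ennreal (\<mu>/2) * ennreal (LINT s:{0..}|lborel. (F s)\<^sup>2 * wt d s) +
      ennreal (k\<^sup>2/(2*\<mu>)) * ennreal (Gamma (2-d) / (2*c) powr (2-d))
    = ennreal (\<mu>/2 * (LINT s:{0..}|lborel. (F s)\<^sup>2 * wt d s) + k\<^sup>2/(2*\<mu>) * (Gamma (2-d) / (2*c) powr (2-d)))"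
  proof -
    have I: "(LINT s:{0..}|lborel. (F s)\<^sup>2 * wt d s) \<ge> 0"
      by (auto simp: set_lebesgue_integral_def indicator_def wnn intro!: Bochner_Integration.integral_nonneg)
    have G: "Gamma (2-d) / (2*c) powr (2-d) \<ge> 0" using d c by (simp add: less_imp_le)
    show ?thesis using I G mu by (intro ennreal_comb) auto
  qed
  finally show ?thesis .
qed



lemma opt_mu:
  fixes a b z r :: real
  assumes a: "a \<ge> 0" and b: "b \<ge> 0" and H: "\<And>\<mu>. \<mu> > 0 \<Longrightarrow> z \<le> \<mu>/2 * a + b/(2*\<mu>) + r"
  shows "z \<le> sqrt (a*b) + r"
proof (cases "a > 0 \<and> b > 0")
  case True
  define \<mu> where "\<mu> = sqrt b / sqrt a"
  have mu: "\<mu> > 0" using True by (simp add: \<mu>_def)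
  have sa: "sqrt a * sqrt a = a" "sqrt b * sqrt b = b" using a b by simp_all
  have "\<mu>/2 * a + b/(2*\<mu>) = sqrt a * sqrt b"
    using True sa unfolding \<mu>_def by (simp add: field_simps)
  then show ?thesis using H[OF mu] by (simp add: real_sqrt_mult)
next
  case False
  then have ab: "a * b = 0" using a b by auto
  show ?thesis
  proof (rule ccontr)
    assume "\<not> z \<le> sqrt (a*b) + r"
    then have e: "z - r > 0" using ab by simp
    show False
    proof (cases "a = 0")
      case True
      define \<mu> where "\<mu> = b/(z-r) + 1"
      have mu: "\<mu> > 0" using b e by (simp add: \<mu>_def add_nonneg_pos)
      have eq: "2 * \<mu> * (z - r) = 2*b + 2*(z-r)" using e by (simp add: \<mu>_def field_simps)
      have "b < 2*b + 2*(z-r)" using b e by (simp add: algebra_simps)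
      then have "b < 2 * \<mu> * (z - r)" by (simp only: eq)
      then have "b/(2*\<mu>) < z - r" using mu by (simp add: divide_simps mult.commute)
      then show False using H[OF mu] True by simp
    next
      case False
      then have b0: "b = 0" "a > 0" using ab a by auto
      define \<mu> where "\<mu> = (z - r)/a"
      have mu: "\<mu> > 0" using b0 e by (simp add: \<mu>_def)
      have "\<mu>/2 * a = (z - r)/2" using b0 by (simp add: \<mu>_def)
      then show False using H[OF mu] b0 e by (simp add: field_simps)
    qed
  qed
qed



lemma bound_c:
  assumes d: "1 \<le> d" "d < 2" and H: "H1w d u u'" and t: "0 \<le> t" and c: "c > 0"
  shows "cmod (u t) \<le> sqrt ((LINT s:{0..}|lborel. (cmod (u s))\<^sup>2 * wt d s) * (c\<^sup>2 * (Gamma (2-d) / (2*c) powr (2-d))))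
       + sqrt ((LINT s:{0..}|lborel. (cmod (u' s))\<^sup>2 * wt d s) * (Gamma (2-d) / (2*c) powr (2-d)))"
proof -
  define B where "B = (LINT s:{0..}|lborel. (cmod (u s))\<^sup>2 * wt d s)"
  define A where "A = (LINT s:{0..}|lborel. (cmod (u' s))\<^sup>2 * wt d s)"
  define G where "G = Gamma (2-d) / (2*c) powr (2-d)"
  have um[measurable]: "u \<in> borel_measurable borel" "u' \<in> borel_measurable borel"
    using H unfolding H1w_def by auto
  have iu: "set_integrable lborel {0..} (\<lambda>s. (cmod (u s))\<^sup>2 * wt d s)"
   and iu': "set_integrable lborel {0..} (\<lambda>s. (cmod (u' s))\<^sup>2 * wt d s)"
    using H unfolding H1w_def by auto
  have wnn: "wt d s \<ge> 0" for s by (simp add: wt_def)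
  have Bnn: "B \<ge> 0" "A \<ge> 0" unfolding B_def A_def
    by (auto simp: set_lebesgue_integral_def indicator_def wnn intro!: Bochner_Integration.integral_nonneg)
  have Gnn: "G \<ge> 0" unfolding G_def using d c by (simp add: less_imp_le)
  have main: "cmod (u t) \<le> (\<mu>/2 * B + c\<^sup>2 * G/(2*\<mu>)) + (la/2 * A + G/(2*la))"
    if mu: "\<mu> > 0" and lap: "la > 0" for \<mu> la
  proof -
    have P1: "(\<integral>\<^sup>+s. ennreal (indicator {t<..} s * c * cmod (u s) * exp (-(c*(s-t)))) \<partial>lborel)
       \<le> ennreal (\<mu>/2 * B + c\<^sup>2/(2*\<mu>) * G)"
      unfolding B_def G_def by (rule part[OF d t c mu _ _ _ iu]) (use c in auto)
    have P2: "(\<integral>\<^sup>+s. ennreal (indicator {t<..} s * 1 * cmod (u' s) * exp (-(c*(s-t)))) \<partial>lborel)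
       \<le> ennreal (la/2 * A + 1\<^sup>2/(2*la) * G)"
      unfolding A_def G_def by (rule part[OF d t c lap _ _ _ iu']) auto
    have "ennreal (cmod (u t)) \<le>
     (\<integral>\<^sup>+s. ennreal (c * indicator {t<..} s * exp (-(c*(s-t))) * cmod (u s)) \<partial>lborel)
   + (\<integral>\<^sup>+\<sigma>. ennreal (indicator {t<..} \<sigma> * cmod (u' \<sigma>) * exp (-(c*(\<sigma>-t)))) \<partial>lborel)"
      by (rule avg[OF H t c])
    also have "(\<integral>\<^sup>+s. ennreal (c * indicator {t<..} s * exp (-(c*(s-t))) * cmod (u s)) \<partial>lborel)
       = (\<integral>\<^sup>+s. ennreal (indicator {t<..} s * c * cmod (u s) * exp (-(c*(s-t)))) \<partial>lborel)"
      by (rule nn_integral_cong) (simp add: mult_ac)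
    also have "(\<integral>\<^sup>+\<sigma>. ennreal (indicator {t<..} \<sigma> * cmod (u' \<sigma>) * exp (-(c*(\<sigma>-t)))) \<partial>lborel)
       = (\<integral>\<^sup>+s. ennreal (indicator {t<..} s * 1 * cmod (u' s) * exp (-(c*(s-t)))) \<partial>lborel)"
      by simp
    finally have "ennreal (cmod (u t)) \<le> ennreal (\<mu>/2 * B + c\<^sup>2/(2*\<mu>) * G) + ennreal (la/2 * A + 1\<^sup>2/(2*la) * G)"
      using P1 P2 by (meson add_mono order_trans)
    also have "\<dots> = ennreal ((\<mu>/2 * B + c\<^sup>2/(2*\<mu>) * G) + (la/2 * A + 1\<^sup>2/(2*la) * G))"
      using Bnn Gnn mu lap by (intro ennreal_plus[symmetric]) auto
    finally have "cmod (u t) \<le> (\<mu>/2 * B + c\<^sup>2/(2*\<mu>) * G) + (la/2 * A + 1\<^sup>2/(2*la) * G)"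
      using Bnn Gnn mu lap by (subst (asm) ennreal_le_iff) auto
    then show ?thesis by simp
  qed
  have step: "cmod (u t) \<le> sqrt (B * (c\<^sup>2 * G)) + (la/2 * A + G/(2*la))" if lap: "la > 0" for la
    by (rule opt_mu) (use main[OF _ lap] Bnn Gnn in \<open>auto simp: mult.commute\<close>)
  have "cmod (u t) \<le> sqrt (A * G) + sqrt (B * (c\<^sup>2 * G))"
    by (rule opt_mu) (use step Bnn Gnn in \<open>auto simp: add.commute\<close>)
  then show ?thesis unfolding A_def B_def G_def by simp
qed



lemma gamma_le1:
  fixes z :: real assumes z: "1 \<le> z" "z \<le> 2"
  shows "Gamma z \<le> 1"
proof -
  have zp: "z > 0" using z by simp
  define f where "f t = indicator {0..} t * t powr (2 - 1) / exp t" for t :: real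
  define g where "g t = 1 * indicator {0<..} t * exp (-(1*(t-0)))" for t :: real
  have "ennreal (Gamma z) = (\<integral>\<^sup>+t. ennreal (indicator {0..} t * t powr (z - 1) / exp t) \<partial>lborel)"
    using Gamma_conv_nn_integral_real[OF zp] by simp
  also have "\<dots> \<le> (\<integral>\<^sup>+t. ennreal (z-1) * ennreal (f t) + ennreal (2-z) * ennreal (g t) \<partial>lborel)"
  proof (rule nn_integral_mono)
    fix t :: real
    have fn: "f t \<ge> 0" "g t \<ge> 0" by (auto simp: f_def g_def indicator_def)
    have "indicator {0..} t * t powr (z - 1) / exp t \<le> (z-1) * f t + (2-z) * g t"
    proof (cases "t > 0")
      case True
      have "t powr (z-1) * 1 powr (2-z) \<le> (z-1)*t + (2-z)*1"
        by (rule Youngs_inequality_0) (use z True in auto)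
      then have "t powr (z-1) * inverse (exp t) \<le> ((z-1)*t + (2-z)) * inverse (exp t)"
        by (intro mult_right_mono) auto
      then show ?thesis using True by (simp add: f_def g_def exp_minus algebra_simps divide_inverse)
    next
      case False
      then show ?thesis using fn z by (auto simp: indicator_def)
    qed
    then have "ennreal (indicator {0..} t * t powr (z - 1) / exp t) \<le> ennreal ((z-1) * f t + (2-z) * g t)"
      by (rule ennreal_leI)
    also have "\<dots> = ennreal (z-1) * ennreal (f t) + ennreal (2-z) * ennreal (g t)"
      using fn z by (simp add: ennreal_plus ennreal_mult)
    finally show "ennreal (indicator {0..} t * t powr (z - 1) / exp t) \<le> ennreal (z-1) * ennreal (f t) + ennreal (2-z) * ennreal (g t)" .
  qed
  also have "\<dots> = ennreal (z-1) * (\<integral>\<^sup>+t. ennreal (f t) \<partial>lborel) + ennreal (2-z) * (\<integral>\<^sup>+t. ennreal (g t) \<partial>lborel)"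
    by (simp add: nn_integral_add nn_integral_cmult f_def g_def)
  also have "(\<integral>\<^sup>+t. ennreal (f t) \<partial>lborel) = ennreal (Gamma 2)"
    unfolding f_def using Gamma_conv_nn_integral_real[of 2] by simp
  also have "(\<integral>\<^sup>+t. ennreal (g t) \<partial>lborel) = 1"
    unfolding g_def by (rule exp_total) simp
  also have "Gamma 2 = (1::real)" by (simp add: Gamma_numeral)
  finally have "ennreal (Gamma z) \<le> ennreal (z - 1) + ennreal (2 - z)" by simp
  also have "\<dots> = ennreal 1" using z by (subst ennreal_plus[symmetric]) auto
  finally show ?thesis by (subst (asm) ennreal_le_iff) auto
qed



lemma ln_lower: "0 < (x::real) \<Longrightarrow> 1 - 1/x \<le> ln x"
proof -
  assume x: "0 < x"
  have "ln (1/x) \<le> 1/x - 1" using x by (intro ln_le_minus_one) simp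
  then show ?thesis using x by (simp add: ln_div)
qed

lemma key_ln:
  fixes d :: real assumes d: "1 < d" "d < 2"
  shows "2 * ln 2 \<le> 2 * ln d + (2-d) * (ln 2 + ln (2-d) - ln d) + d * (ln 2 + ln d)
           - 2*(d-1) * (ln 2 + ln (d-1))"
proof -
  have F1: "(2-d) * ln (2-d) \<ge> 1 - d"
  proof -
    have "(2-d) * (1 - 1/(2-d)) \<le> (2-d) * ln (2-d)"
      by (rule mult_left_mono) (use d ln_lower[of "2-d"] in auto)
    then show ?thesis using d by (simp add: algebra_simps)
  qed
  have F2: "2 * ln d \<ge> d - 1"
  proof -
    have "1 - 1/d \<le> ln d" using d ln_lower[of d] by simp
    moreover have "d - 1 \<le> 2 * (1 - 1/d)"
    proof -
      have "(d-1)*(2 - d) \<ge> 0" using d by simp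
      then have "d*(d-1) \<le> 2*(d-1)" by (simp add: algebra_simps)
      then have "d - 1 \<le> 2*(d-1)/d" using d by (simp add: field_simps)
      also have "2*(d-1)/d = 2 * (1 - 1/d)" using d by (simp add: field_simps)
      finally show ?thesis .
    qed
    ultimately show ?thesis by simp
  qed
  have F3: "(d-1) * (ln 2 + ln (d-1)) \<le> (d-1) * ln d"
  proof -
    have "ln (2*(d-1)) \<le> ln d" using d by (subst ln_le_cancel_iff) auto
    moreover have "ln (2*(d-1)) = ln 2 + ln (d-1)" using d by (subst ln_mult) auto
    ultimately have "ln 2 + ln (d-1) \<le> ln d" by simp
    then show ?thesis by (rule mult_left_mono) (use d in simp)
  qed
  have eq: "2 * ln d + (2-d) * (ln 2 + ln (2-d) - ln d) + d * (ln 2 + ln d)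
           - 2*(d-1) * (ln 2 + ln (d-1)) - 2 * ln 2
     = (2-d) * ln (2-d) + 2 * ln d + 2 * ((d-1) * ln d - (d-1) * (ln 2 + ln (d-1)))"
    by (simp add: algebra_simps)
  have "0 \<le> (2-d) * ln (2-d) + 2 * ln d + 2 * ((d-1) * ln d - (d-1) * (ln 2 + ln (d-1)))"
    using F1 F2 F3 by simp
  then show ?thesis using eq by simp
qed



lemma const_bound:
  fixes d :: real assumes d: "1 \<le> d" "d < 2"
  shows "4 * Gamma (2-d) / (d\<^sup>2 * (2*(2-d)/d) powr (2-d)) \<le> Kconst d"
proof -
  define q where "q = (2*(2-d)/d) powr (2-d)"
  define P where "P = (2*d) powr d"
  define E where "E = (if d = 1 then 1 else (2 * (d - 1)) powr (- 2 * (d - 1)))"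
  have qp: "q > 0" and Pp: "P > 0" and Ep: "E > 0" using d by (auto simp: q_def P_def E_def)
  have K: "Kconst d = P * E / (2-d)" by (simp add: Kconst_def P_def E_def)
  have gp: "Gamma (2-d) > 0" using d by simp
  have "Gamma ((2-d) + 1) = (2-d) * Gamma (2-d)"
    by (rule Gamma_plus1) (use d in \<open>auto dest: nonpos_Ints_nonpos\<close>)
  moreover have "Gamma ((2-d) + 1) \<le> 1" by (rule gamma_le1) (use d in auto)
  ultimately have g1: "(2-d) * Gamma (2-d) \<le> 1" by simp
  have key: "4 \<le> d\<^sup>2 * q * P * E"
  proof (cases "d = 1")
    case True
    then show ?thesis by (simp add: q_def P_def E_def)
  next
    case False
    then have d1: "1 < d" using d by simp
    have pos: "d\<^sup>2 * q * P * E > 0" using qp Pp Ep d by simp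
    have "ln (d\<^sup>2 * q * P * E) = ln (d\<^sup>2) + ln q + ln P + ln E"
      using qp Pp Ep d by (simp add: ln_mult)
    also have "ln (d\<^sup>2) = 2 * ln d" using d by (simp add: ln_realpow)
    also have "ln q = (2-d) * (ln 2 + ln (2-d) - ln d)"
    proof -
      have "ln (2*(2-d)/d) = ln (2*(2-d)) - ln d" using d1 d by (subst ln_div) auto
      also have "ln (2*(2-d)) = ln 2 + ln (2-d)" using d1 d by (subst ln_mult) auto
      finally show ?thesis by (simp add: q_def)
    qed
    also have "ln P = d * (ln 2 + ln d)" using d1 by (simp add: P_def ln_mult)
    also have "ln E = - 2 * (d-1) * (ln 2 + ln (d-1))"
    proof -
      have "ln (2*(d-1)) = ln 2 + ln (d-1)" using d1 by (subst ln_mult) auto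
      then show ?thesis using d1 by (simp only: E_def if_False ln_powr) simp
    qed
    finally have "ln (d\<^sup>2 * q * P * E) = 2 * ln d + (2-d) * (ln 2 + ln (2-d) - ln d) + d * (ln 2 + ln d)
           - 2*(d-1) * (ln 2 + ln (d-1))" by (simp add: algebra_simps)
    then have "2 * ln 2 \<le> ln (d\<^sup>2 * q * P * E)" using key_ln[OF d1 d(2)] by simp
    moreover have "ln 4 = 2 * ln (2::real)"
      using ln_realpow[of 2 2] by simp
    ultimately have "ln 4 \<le> ln (d\<^sup>2 * q * P * E)" by simp
    then show ?thesis using pos by (subst (asm) ln_le_cancel_iff) auto
  qed
  have "4 * Gamma (2-d) / (d\<^sup>2 * q) \<le> 4 / ((2-d) * (d\<^sup>2 * q))"
  proof -
    have "Gamma (2-d) \<le> 1 / (2-d)" using g1 d by (simp add: field_simps)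
    then have "4 * Gamma (2-d) / (d\<^sup>2 * q) \<le> 4 * (1/(2-d)) / (d\<^sup>2 * q)"
      using qp d by (intro divide_right_mono mult_left_mono) auto
    then show ?thesis by simp
  qed
  also have "\<dots> \<le> P * E / (2-d)"
  proof -
    have X: "d\<^sup>2 * q > 0" using qp d by simp
    have "4/(d\<^sup>2*q) \<le> P*E" using key X by (simp add: divide_le_eq mult_ac)
    then have "4/(d\<^sup>2*q)/(2-d) \<le> P*E/(2-d)" by (rule divide_right_mono) (use d in simp)
    then show ?thesis by (simp add: divide_divide_eq_left mult.commute)
  qed
  finally show ?thesis unfolding K q_def .
qed



lemma rw_bound:
  fixes c d \<gamma> A B :: real assumes c: "c > 0" and g: "\<gamma> > 0" and AB: "A \<ge> 0" "B \<ge> 0"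
  shows "sqrt (B * (c\<^sup>2 * (\<gamma> / (2*c) powr (2-d)))) + sqrt (A * (\<gamma> / (2*c) powr (2-d)))
     = sqrt (\<gamma> * 2 powr (d-2)) * (sqrt B * c powr (d/2) + sqrt A * c powr (d/2 - 1))"
proof -
  have e1: "\<gamma> / (2*c) powr (2-d) = \<gamma> * 2 powr (d-2) * c powr (d-2)"
  proof -
    have "(2*c) powr (2-d) = 2 powr (2-d) * c powr (2-d)" by (rule powr_mult)
    moreover have "2 powr (d-2) = inverse (2 powr (2-d))" using powr_minus[of 2 "2-d"] by simp
    moreover have "c powr (d-2) = inverse (c powr (2-d))" using powr_minus[of c "2-d"] by simp
    ultimately show ?thesis by (simp add: divide_inverse)
  qed
  have e2: "c\<^sup>2 * c powr (d-2) = c powr d"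
  proof -
    have "c powr 2 = c\<^sup>2" using c powr_realpow[of c 2] by simp
    then have "c\<^sup>2 * c powr (d-2) = c powr (2 + (d-2))" by (simp only: powr_add)
    then show ?thesis by simp
  qed
  have s1: "sqrt (c powr d) = c powr (d/2)" using c by (simp add: powr_half_sqrt_powr)
  have s2: "sqrt (c powr (d-2)) = c powr (d/2 - 1)"
    using c powr_half_sqrt_powr[of c "d-2"] by (simp add: diff_divide_distrib)
  have "B * (c\<^sup>2 * (\<gamma> / (2*c) powr (2-d))) = (\<gamma> * 2 powr (d-2)) * (B * (c\<^sup>2 * c powr (d-2)))"
    unfolding e1 by (simp only: mult_ac)
  then have "sqrt (B * (c\<^sup>2 * (\<gamma> / (2*c) powr (2-d)))) = sqrt (\<gamma> * 2 powr (d-2)) * (sqrt B * c powr (d/2))"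
    by (simp only: e2 real_sqrt_mult s1)
  moreover have "A * (\<gamma> / (2*c) powr (2-d)) = (\<gamma> * 2 powr (d-2)) * (A * c powr (d-2))"
    unfolding e1 by (simp only: mult_ac)
  then have "sqrt (A * (\<gamma> / (2*c) powr (2-d))) = sqrt (\<gamma> * 2 powr (d-2)) * (sqrt A * c powr (d/2 - 1))"
    by (simp only: real_sqrt_mult s2)
  ultimately show ?thesis by (simp add: distrib_left)
qed



lemma small_contra:
  fixes U K e :: real assumes U: "U > 0" and K: "K \<ge> 0" and e: "e \<noteq> 0"
    and H: "\<And>c. c > 0 \<Longrightarrow> U \<le> K * c powr e"
  shows False
proof -
  define b where "b = U / (K + 1)"
  have bp: "b > 0" using U K by (simp add: b_def)
  define c where "c = b powr (1/e)"
  have cp: "c > 0" using bp by (simp add: c_def)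
  have "c powr e = b" using e bp by (simp add: c_def powr_powr)
  then have "U \<le> K * b" using H[OF cp] by simp
  moreover have "K * b < U"
  proof -
    have "K * b = U * (K / (K+1))" using K by (simp add: b_def field_simps)
    also have "\<dots> < U * 1" using U K by (intro mult_strict_left_mono) auto
    finally show ?thesis by simp
  qed
  ultimately show False by simp
qed

lemma final_opt:
  fixes d A B U \<gamma> M :: real
  assumes d: "1 \<le> d" "d < 2" and A: "A \<ge> 0" and B: "B \<ge> 0" and U: "U \<ge> 0" and g: "\<gamma> > 0"
    and M: "M \<ge> 0" "M\<^sup>2 = \<gamma> * 2 powr (d-2)"
    and H: "\<And>c. c > 0 \<Longrightarrow> U \<le> M * (sqrt B * c powr (d/2) + sqrt A * c powr (d/2 - 1))"
  shows "U\<^sup>2 \<le> 4*\<gamma>/(d\<^sup>2*(2*(2-d)/d) powr (2-d)) * A powr (d/2) * B powr (1-d/2)"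
proof (cases "A > 0 \<and> B > 0")
  case True
  then have Ap: "A > 0" and Bp: "B > 0" by auto
  define r where "r = (2-d)/d"
  have rp: "r > 0" using d by (simp add: r_def)
  define c0 where "c0 = r * (sqrt A / sqrt B)"
  have c0p: "c0 > 0" using rp Ap Bp by (simp add: c0_def)
  define p where "p = c0 powr (d/2 - 1)"
  have h1: "sqrt B * c0 = r * sqrt A" using Bp by (simp add: c0_def)
  have h2: "c0 powr (d/2) = c0 * p"
  proof -
    have "c0 powr (1 + (d/2 - 1)) = c0 powr 1 * p" by (simp only: powr_add p_def)
    then show ?thesis using c0p by simp
  qed
  have "U \<le> M * (sqrt B * c0 powr (d/2) + sqrt A * c0 powr (d/2 - 1))" by (rule H[OF c0p])
  also have "\<dots> = M * p * sqrt A * (r + 1)"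
    unfolding h2 p_def[symmetric] by (simp add: algebra_simps flip: h1)
  also have "r + 1 = 2/d" using d by (simp add: r_def field_simps)
  finally have U1: "U \<le> M * p * sqrt A * (2/d)" .
  have "U\<^sup>2 \<le> (M * p * sqrt A * (2/d))\<^sup>2"
    by (rule power_mono[OF U1 U])
  also have "\<dots> = M\<^sup>2 * (p*p) * A * 4 / d\<^sup>2"
    using Ap by (simp add: power_mult_distrib power2_eq_square field_simps)
  also have "p * p = c0 powr (d-2)"
  proof -
    have "p * p = c0 powr ((d/2-1) + (d/2-1))" by (simp only: p_def powr_add)
    then show ?thesis by (simp add: algebra_simps)
  qed
  also have "c0 powr (d-2) = r powr (d-2) * (A powr ((d-2)/2) / B powr ((d-2)/2))"
  proof -
    have "c0 powr (d-2) = r powr (d-2) * ((sqrt A) powr (d-2) / (sqrt B) powr (d-2))"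
      by (simp only: c0_def powr_mult powr_divide)
    also have "sqrt A = A powr (1/2)" using A by (simp add: powr_half_sqrt)
    also have "sqrt B = B powr (1/2)" using B by (simp add: powr_half_sqrt)
    finally show ?thesis by (simp add: powr_powr)
  qed
  also have "M\<^sup>2 * (r powr (d-2) * (A powr ((d-2)/2) / B powr ((d-2)/2))) * A * 4 / d\<^sup>2
     = 4 * \<gamma> * (2 powr (d-2) * r powr (d-2)) * (A powr ((d-2)/2) * A) * (1 / B powr ((d-2)/2)) / d\<^sup>2"
    unfolding M(2) by (simp add: field_simps)
  also have "2 powr (d-2) * r powr (d-2) = 1 / (2*(2-d)/d) powr (2-d)"
  proof -
    have "2 powr (d-2) * r powr (d-2) = (2 * r) powr (d-2)" by (simp only: powr_mult)
    also have "\<dots> = 1 / (2*r) powr (2-d)" using powr_minus_divide[of "2*r" "2-d"] by simp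
    also have "2 * r = 2*(2-d)/d" by (simp add: r_def)
    finally show ?thesis .
  qed
  also have "A powr ((d-2)/2) * A = A powr (d/2)"
  proof -
    have "A powr ((d-2)/2) * A = A powr ((d-2)/2) * A powr 1" using Ap by simp
    also have "\<dots> = A powr ((d-2)/2 + 1)" by (simp only: powr_add)
    finally show ?thesis by (simp add: field_simps)
  qed
  also have "1 / B powr ((d-2)/2) = B powr (1 - d/2)"
  proof -
    have "-((d-2)/2) = 1 - d/2" by (simp add: field_simps)
    then show ?thesis using powr_minus_divide[of B "(d-2)/2"] by simp
  qed
  finally show ?thesis by (simp add: field_simps)
next
  case False
  have RHS0: "A powr (d/2) * B powr (1-d/2) = 0"
    using False A B by auto
  have "U = 0"
  proof (rule ccontr)
    assume "U \<noteq> 0"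
    then have Up: "U > 0" using U by simp
    show False
    proof (cases "A = 0")
      case True
      show False
        by (rule small_contra[OF Up _ _, of "M * sqrt B" "d/2"]) (use H True M B d in \<open>auto simp: mult.assoc\<close>)
    next
      case False
      then have "B = 0" using \<open>\<not> (A > 0 \<and> B > 0)\<close> A B by auto
      show False
        by (rule small_contra[OF Up _ _, of "M * sqrt A" "d/2 - 1"]) (use H \<open>B = 0\<close> M A d in \<open>auto simp: mult.assoc\<close>)
    qed
  qed
  then show ?thesis by (simp only: mult.assoc RHS0 mult_zero_right) simp
qed


theorem lemma6p5:
  fixes d :: real and u u' :: "real \<Rightarrow> complex"
  assumes "1 \<le> d" and "d < 2"
    and "H1w d u u'"
  shows "\<forall>t\<ge>0. (cmod (u t))\<^sup>2 \<le>
     Kconst d * (LBINT s:{0..}. (cmod (u' s))\<^sup>2 * wt d s) powr (d / 2)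
              * (LBINT s:{0..}. (cmod (u s))\<^sup>2 * wt d s) powr (1 - d / 2)"
proof (intro allI impI)
  fix t :: real assume t: "0 \<le> t"
  have d: "1 \<le> d" "d < 2" using assms(1,2) by auto
  have H: "H1w d u u'" by (rule assms(3))
  define A where "A = (LBINT s:{0..}. (cmod (u' s))\<^sup>2 * wt d s)"
  define B where "B = (LBINT s:{0..}. (cmod (u s))\<^sup>2 * wt d s)"
  define \<gamma> where "\<gamma> = Gamma (2-d)"
  define M where "M = sqrt (\<gamma> * 2 powr (d-2))"
  have wnn: "wt d s \<ge> 0" for s by (simp add: wt_def)
  have AB: "A \<ge> 0" "B \<ge> 0" unfolding B_def A_def
    by (auto simp: set_lebesgue_integral_def indicator_def wnn intro!: Bochner_Integration.integral_nonneg)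
  have g: "\<gamma> > 0" using d by (simp add: \<gamma>_def)
  have M: "M \<ge> 0" "M\<^sup>2 = \<gamma> * 2 powr (d-2)" using g by (auto simp: M_def)
  have bnd: "cmod (u t) \<le> M * (sqrt B * c powr (d/2) + sqrt A * c powr (d/2 - 1))" if c: "c > 0" for c
  proof -
    have "cmod (u t) \<le> sqrt (B * (c\<^sup>2 * (\<gamma> / (2*c) powr (2-d)))) + sqrt (A * (\<gamma> / (2*c) powr (2-d)))"
      using bound_c[OF d H t c] unfolding A_def B_def \<gamma>_def .
    also have "\<dots> = M * (sqrt B * c powr (d/2) + sqrt A * c powr (d/2 - 1))"
      unfolding M_def by (rule rw_bound[OF c g AB(1) AB(2)])
    finally show ?thesis .
  qed
  have "(cmod (u t))\<^sup>2 \<le> 4*\<gamma>/(d\<^sup>2*(2*(2-d)/d) powr (2-d)) * A powr (d/2) * B powr (1-d/2)"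
    by (rule final_opt[OF d AB(1) AB(2) _ g M bnd]) auto
  also have "\<dots> \<le> Kconst d * A powr (d/2) * B powr (1-d/2)"
  proof -
    have "4*\<gamma>/(d\<^sup>2*(2*(2-d)/d) powr (2-d)) \<le> Kconst d"
      unfolding \<gamma>_def by (rule const_bound[OF d])
    then have "4*\<gamma>/(d\<^sup>2*(2*(2-d)/d) powr (2-d)) * (A powr (d/2) * B powr (1-d/2))
        \<le> Kconst d * (A powr (d/2) * B powr (1-d/2))"
      by (rule mult_right_mono) simp
    then show ?thesis by (simp only: mult.assoc)
  qed
  finally show "(cmod (u t))\<^sup>2 \<le>
     Kconst d * (LBINT s:{0..}. (cmod (u' s))\<^sup>2 * wt d s) powr (d / 2)
              * (LBINT s:{0..}. (cmod (u s))\<^sup>2 * wt d s) powr (1 - d / 2)"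
    unfolding A_def B_def .
qed

end
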